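(* Let $(\mathcal{A},\mathcal{H},\mathcal{D})$ be a $QC^\infty$ spectral triple with $\mathcal{A}$ commutative, unital and complete, satisfying the first order condition $[[\mathcal{D},a],b]=0$ for all $a,b\in\mathcal{A}$ and the irreducibility condition (the only bounded operators on $\mathcal{H}$ commuting with $\mathcal{D}$ and with all $a\in\mathcal{A}$ are the scalars). Then $\mathcal{A}$ contains no projector other than $0$ and $1$.
   Context: A spectral triple $(\mathcal{A},\mathcal{H},\mathcal{D})$ consists of a unital $*$-algebra $\mathcal{A}$ faithfully represented by bounded operators on a Hilbert space $\mathcal{H}$ and a selfadjoint operator $\mathcal{D}$ with dense domain such that for each $a\in\mathcal{A}$, $[\mathcal{D},a]$ extends to a bounded operator and $a(1+\mathcal{D}^2)^{-1/2}$ is compact. With $\delta(x)=[|\mathcal{D}|,x]$, the triple is $QC^\infty$ if $\mathcal{A}\cup[\mathcal{D},\mathcal{A}]\subseteq\bigcap_{m\ge1}\mathrm{Dom}\,\delta^m$ (where $\mathrm{Dom}\,\delta$ consists of bounded $x$ with $[|\mathcal{D}|,x]$ bounded); "complete" means complete in the topology of the seminorms $a\mapsto\|\delta^m(a)\|$, $\|\delta^m([\mathcal{D},a])\|$. A projector is an element $q$ with $q=q^*=q^2$. *)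

theory Defs
  imports "HOL-Analysis.Analysis"
begin

text \<open>A complex Hilbert space is modelled as a real Hilbert space (type of class
real_inner and complete_space) together with an orthogonal complex structure J
(multiplication by the imaginary unit).\<close>

definition complex_structure :: "('h::real_inner \<Rightarrow> 'h) \<Rightarrow> bool" where
  "complex_structure J \<longleftrightarrow> linear J \<and> (\<forall>x. J (J x) = - x) \<and> (\<forall>x y. inner (J x) (J y) = inner x y)"

definition cscale :: "('h::real_vector \<Rightarrow> 'h) \<Rightarrow> complex \<Rightarrow> 'h \<Rightarrow> 'h" where
  "cscale J c x = Re c *\<^sub>R x + Im c *\<^sub>R J x"

definition cinner :: "('h::real_inner \<Rightarrow> 'h) \<Rightarrow> 'h \<Rightarrow> 'h \<Rightarrow> complex" where
  "cinner J x y = Complex (inner x y) (- inner x (J y))"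

definition cbounded :: "('h::real_normed_vector \<Rightarrow> 'h) \<Rightarrow> ('h \<Rightarrow> 'h) \<Rightarrow> bool" where
  "cbounded J T \<longleftrightarrow> bounded_linear T \<and> (\<forall>x. T (J x) = J (T x))"

definition compact_op :: "('h::real_normed_vector \<Rightarrow> 'h) \<Rightarrow> bool" where
  "compact_op T \<longleftrightarrow> (\<forall>S. bounded S \<longrightarrow> compact (closure (T ` S)))"

text \<open>An (unbounded) operator is a pair (domain, action); the action is only relevant on the domain.\<close>
type_synonym 'h uop = "'h set \<times> ('h \<Rightarrow> 'h)"

definition udom :: "'h uop \<Rightarrow> 'h set" where "udom D = fst D"
definition uapp :: "'h uop \<Rightarrow> 'h \<Rightarrow> 'h" where "uapp D = snd D"

definition densely_defined_clinear :: "('h::real_normed_vector \<Rightarrow> 'h) \<Rightarrow> 'h uop \<Rightarrow> bool" where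
  "densely_defined_clinear J D \<longleftrightarrow>
     subspace (udom D) \<and> J ` udom D \<subseteq> udom D \<and> closure (udom D) = UNIV \<and>
     (\<forall>x\<in>udom D. \<forall>y\<in>udom D. uapp D (x + y) = uapp D x + uapp D y) \<and>
     (\<forall>x\<in>udom D. \<forall>c. uapp D (c *\<^sub>R x) = c *\<^sub>R uapp D x) \<and>
     (\<forall>x\<in>udom D. uapp D (J x) = J (uapp D x))"

text \<open>For a densely defined complex-linear operator on a complex
subspace, the condition with the real inner product (= real part of the complex one) is
equivalent to the one with the complex inner product.\<close>
definition adj_dom :: "'h::real_inner uop \<Rightarrow> 'h set" where
  "adj_dom D = {y. \<exists>z. \<forall>x\<in>udom D. inner y (uapp D x) = inner z x}"

definition selfadjoint_op :: "('h::real_inner \<Rightarrow> 'h) \<Rightarrow> 'h uop \<Rightarrow> bool" where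
  "selfadjoint_op J D \<longleftrightarrow> densely_defined_clinear J D \<and> adj_dom D = udom D \<and>
     (\<forall>x\<in>udom D. \<forall>y\<in>udom D. inner y (uapp D x) = inner (uapp D y) x)"

definition positive_op :: "'h::real_inner uop \<Rightarrow> bool" where
  "positive_op D \<longleftrightarrow> (\<forall>x\<in>udom D. 0 \<le> inner x (uapp D x))"

definition ucomp :: "'h uop \<Rightarrow> 'h uop \<Rightarrow> 'h uop" where
  "ucomp D E = ({x\<in>udom E. uapp E x \<in> udom D}, uapp D \<circ> uapp E)"

definition uop_eq :: "'h uop \<Rightarrow> 'h uop \<Rightarrow> bool" where
  "uop_eq D E \<longleftrightarrow> udom D = udom E \<and> (\<forall>x\<in>udom D. uapp D x = uapp E x)"

definition abs_op :: "('h::real_inner \<Rightarrow> 'h) \<Rightarrow> 'h uop \<Rightarrow> 'h uop" where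
  "abs_op J D = (SOME T. selfadjoint_op J T \<and> positive_op T \<and> uop_eq (ucomp T T) (ucomp D D))"

text \<open>(1 + D^2)^(-1/2): the positive bounded square root of the bounded inverse of 1 + D^2.\<close>
definition resolvent_half :: "('h::{real_inner,complete_space} \<Rightarrow> 'h) \<Rightarrow> 'h uop \<Rightarrow> ('h \<Rightarrow> 'h)" where
  "resolvent_half J D = (SOME R. cbounded J R \<and> adjoint R = R \<and> (\<forall>x. 0 \<le> inner x (R x)) \<and>
      (\<forall>y. R (R y) \<in> udom (ucomp D D) \<and> R (R y) + uapp D (uapp D (R (R y))) = y))"

definition has_bdd_comm :: "('h::real_normed_vector \<Rightarrow> 'h) \<Rightarrow> 'h uop \<Rightarrow> ('h \<Rightarrow> 'h) \<Rightarrow> bool" where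
  "has_bdd_comm J D a \<longleftrightarrow> cbounded J a \<and> a ` udom D \<subseteq> udom D \<and>
     (\<exists>T. cbounded J T \<and> (\<forall>x\<in>udom D. T x = uapp D (a x) - a (uapp D x)))"

text \<open>The (unique, by density) bounded extension of [D,a].\<close>
definition comm :: "('h::real_normed_vector \<Rightarrow> 'h) \<Rightarrow> 'h uop \<Rightarrow> ('h \<Rightarrow> 'h) \<Rightarrow> ('h \<Rightarrow> 'h)" where
  "comm J D a = (SOME T. cbounded J T \<and> (\<forall>x\<in>udom D. T x = uapp D (a x) - a (uapp D x)))"

fun delta_pow :: "('h::real_inner \<Rightarrow> 'h) \<Rightarrow> 'h uop \<Rightarrow> nat \<Rightarrow> ('h \<Rightarrow> 'h) \<Rightarrow> ('h \<Rightarrow> 'h)" where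
  "delta_pow J D 0 x = x"
| "delta_pow J D (Suc m) x = delta_pow J D m (comm J (abs_op J D) x)"

fun in_dom_delta_pow :: "('h::real_inner \<Rightarrow> 'h) \<Rightarrow> 'h uop \<Rightarrow> nat \<Rightarrow> ('h \<Rightarrow> 'h) \<Rightarrow> bool" where
  "in_dom_delta_pow J D 0 x = cbounded J x"
| "in_dom_delta_pow J D (Suc m) x =
     (has_bdd_comm J (abs_op J D) x \<and> in_dom_delta_pow J D m (comm J (abs_op J D) x))"

definition unital_star_algebra :: "('h::{real_inner,complete_space} \<Rightarrow> 'h) \<Rightarrow> ('h \<Rightarrow> 'h) set \<Rightarrow> bool" where
  "unital_star_algebra J A \<longleftrightarrow>
     (\<forall>a\<in>A. cbounded J a) \<and> id \<in> A \<and>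
     (\<forall>a\<in>A. \<forall>b\<in>A. (\<lambda>x. a x + b x) \<in> A) \<and>
     (\<forall>a\<in>A. \<forall>b\<in>A. a \<circ> b \<in> A) \<and>
     (\<forall>a\<in>A. \<forall>c. (\<lambda>x. cscale J c (a x)) \<in> A) \<and>
     (\<forall>a\<in>A. adjoint a \<in> A)"

definition spectral_triple :: "('h::{real_inner,complete_space} \<Rightarrow> 'h) \<Rightarrow> ('h \<Rightarrow> 'h) set \<Rightarrow> 'h uop \<Rightarrow> bool" where
  "spectral_triple J A D \<longleftrightarrow>
     complex_structure J \<and> unital_star_algebra J A \<and> selfadjoint_op J D \<and>
     (\<forall>a\<in>A. has_bdd_comm J D a) \<and>
     (\<forall>a\<in>A. compact_op (a \<circ> resolvent_half J D))"

definition QC_infty :: "('h::{real_inner,complete_space} \<Rightarrow> 'h) \<Rightarrow> ('h \<Rightarrow> 'h) set \<Rightarrow> 'h uop \<Rightarrow> bool" where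
  "QC_infty J A D \<longleftrightarrow>
     (\<forall>a\<in>A. \<forall>m\<ge>1. in_dom_delta_pow J D m a \<and> in_dom_delta_pow J D m (comm J D a))"

text \<open>Completeness of A for the countable family of seminorms
  a \<mapsto> ||delta^m(a)||, a \<mapsto> ||delta^m([D,a])||  (m \<ge> 0); the topology is metrizable,
  so sequential completeness is completeness.\<close>
definition complete_algebra :: "('h::{real_inner,complete_space} \<Rightarrow> 'h) \<Rightarrow> ('h \<Rightarrow> 'h) set \<Rightarrow> 'h uop \<Rightarrow> bool" where
  "complete_algebra J A D \<longleftrightarrow>
     (\<forall>s. (\<forall>n. s n \<in> A) \<longrightarrow>
        (\<forall>m. \<forall>e>0. \<exists>N. \<forall>n\<ge>N. \<forall>k\<ge>N.
            onorm (delta_pow J D m (\<lambda>x. s n x - s k x)) < e \<and>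
            onorm (delta_pow J D m (comm J D (\<lambda>x. s n x - s k x))) < e) \<longrightarrow>
        (\<exists>a\<in>A. \<forall>m. (\<lambda>n. onorm (delta_pow J D m (\<lambda>x. s n x - a x))) \<longlonglongrightarrow> 0 \<and>
                    (\<lambda>n. onorm (delta_pow J D m (comm J D (\<lambda>x. s n x - a x)))) \<longlonglongrightarrow> 0))"

definition commutative_algebra :: "('h \<Rightarrow> 'h) set \<Rightarrow> bool" where
  "commutative_algebra A \<longleftrightarrow> (\<forall>a\<in>A. \<forall>b\<in>A. a \<circ> b = b \<circ> a)"

definition first_order :: "('h::real_normed_vector \<Rightarrow> 'h) \<Rightarrow> ('h \<Rightarrow> 'h) set \<Rightarrow> 'h uop \<Rightarrow> bool" where
  "first_order J A D \<longleftrightarrow> (\<forall>a\<in>A. \<forall>b\<in>A. comm J D a \<circ> b = b \<circ> comm J D a)"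

definition commutes_with_uop :: "('h \<Rightarrow> 'h) \<Rightarrow> 'h uop \<Rightarrow> bool" where
  "commutes_with_uop T D \<longleftrightarrow> T ` udom D \<subseteq> udom D \<and> (\<forall>x\<in>udom D. uapp D (T x) = T (uapp D x))"

definition irreducible_triple :: "('h::real_normed_vector \<Rightarrow> 'h) \<Rightarrow> ('h \<Rightarrow> 'h) set \<Rightarrow> 'h uop \<Rightarrow> bool" where
  "irreducible_triple J A D \<longleftrightarrow>
     (\<forall>T. cbounded J T \<and> commutes_with_uop T D \<and> (\<forall>a\<in>A. T \<circ> a = a \<circ> T) \<longrightarrow>
          (\<exists>c. T = cscale J c))"

definition projector :: "('h::real_inner \<Rightarrow> 'h) \<Rightarrow> bool" where
  "projector q \<longleftrightarrow> q = adjoint q \<and> q \<circ> q = q"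

end

theory Submission
  imports Defs
begin

lemma cscale_idem_cases:
  fixes J :: "'h::real_inner \<Rightarrow> 'h" and x :: 'h
  assumes cs: "complex_structure J"
    and idem: "\<And>x. cscale J c (cscale J c x) = cscale J c x"
    and x0: "x \<noteq> 0"
  shows "c = 0 \<or> c = 1"
proof -
  have lin: "linear J" and JJ: "\<And>x. J (J x) = - x" and JI: "\<And>x y. inner (J x) (J y) = inner x y"
    using cs unfolding complex_structure_def by auto
  have o: "inner x (J x) = 0"
  proof -
    have "inner x (J x) = inner (J x) (J (J x))" using JI by simp
    also have "\<dots> = - inner x (J x)" using JJ by (simp add: inner_commute)
    finally show ?thesis by simp
  qed
  have o2: "inner (J x) x = 0" using o by (simp add: inner_commute)
  have nJ: "inner (J x) (J x) = inner x x" using JI by simp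
  have pos: "inner x x > 0" using x0 by simp
  define r where "r = Re c"
  define i where "i = Im c"
  have e: "cscale J c (cscale J c x) = (r*r - i*i) *\<^sub>R x + (2*r*i) *\<^sub>R J x"
  proof -
    have "cscale J c (cscale J c x) = r *\<^sub>R (r *\<^sub>R x + i *\<^sub>R J x) + i *\<^sub>R J (r *\<^sub>R x + i *\<^sub>R J x)"
      unfolding cscale_def r_def i_def by simp
    also have "\<dots> = r *\<^sub>R (r *\<^sub>R x + i *\<^sub>R J x) + i *\<^sub>R (r *\<^sub>R J x - i *\<^sub>R x)"
      using lin by (simp add: linear_add linear_scale JJ)
    also have "\<dots> = (r*r - i*i) *\<^sub>R x + (2*r*i) *\<^sub>R J x"
      by (simp add: scaleR_add_right scaleR_diff_right scaleR_diff_left scaleR_add_left algebra_simps) (metis mult.commute scaleR_2 scaleR_scaleR)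
    finally show ?thesis .
  qed
  have e2: "cscale J c x = r *\<^sub>R x + i *\<^sub>R J x" unfolding cscale_def r_def i_def by simp
  have eq: "(r*r - i*i) *\<^sub>R x + (2*r*i) *\<^sub>R J x = r *\<^sub>R x + i *\<^sub>R J x"
    using idem[of x] e e2 by simp
  have a1: "(r*r - i*i) * inner x x = r * inner x x"
    using arg_cong[OF eq, of "\<lambda>v. inner v x"] by (simp add: inner_add_left o2)
  have a2: "(2*r*i) * inner x x = i * inner x x"
    using arg_cong[OF eq, of "\<lambda>v. inner v (J x)"] by (simp add: inner_add_left o nJ)
  have b1: "r*r - i*i = r" using a1 pos by simp
  have b2: "2*r*i = i" using a2 pos by simp
  have "i = 0"
  proof (rule ccontr)
    assume "i \<noteq> 0"
    then have "r = 1/2" using b2 by (simp add: field_simps)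
    then have "i*i = r*r - r" using b1 by linarith
    then have "i*i < 0" using \<open>r = 1/2\<close> by simp
    then show False using zero_le_square[of i] by linarith
  qed
  then have "r = 0 \<or> r = 1" using b1 by auto
  then show ?thesis using \<open>i = 0\<close> unfolding r_def i_def by (auto simp: complex_eq_iff)
qed

theorem lemma3p16:
  fixes J :: "'h::{real_inner,complete_space} \<Rightarrow> 'h"
    and A :: "('h \<Rightarrow> 'h) set"
    and D :: "'h uop"
  assumes "spectral_triple J A D"
    and "QC_infty J A D"
    and "commutative_algebra A"
    and "complete_algebra J A D"
    and "first_order J A D"
    and "irreducible_triple J A D"
    and "q \<in> A" and "projector q"
  shows "q = (\<lambda>x. 0) \<or> q = id"
proof -
  have cs: "complex_structure J" and usa: "unital_star_algebra J A"
    and hb: "has_bdd_comm J D q"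
    using assms(1,7) unfolding spectral_triple_def by auto
  have cbq: "cbounded J q" using usa assms(7) unfolding unital_star_algebra_def by auto
  then have lq: "linear q" unfolding cbounded_def using bounded_linear.linear by blast
  have qq: "\<And>x. q (q x) = q x" using assms(8) unfolding projector_def
    by (metis comp_apply)
  define C where "C = comm J D q"
  have dom: "q ` udom D \<subseteq> udom D" using hb unfolding has_bdd_comm_def by auto
  have ex: "\<exists>T. cbounded J T \<and> (\<forall>x\<in>udom D. T x = uapp D (q x) - q (uapp D x))"
    using hb unfolding has_bdd_comm_def by auto
  have Cx: "\<And>x. x \<in> udom D \<Longrightarrow> C x = uapp D (q x) - q (uapp D x)"
    using someI_ex[OF ex] unfolding C_def comm_def by blast
  have fo: "\<And>x. C (q x) = q (C x)" using assms(5,7) unfolding first_order_def C_def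
    by (metis comp_apply)
  have comm: "\<And>x. x \<in> udom D \<Longrightarrow> uapp D (q x) = q (uapp D x)"
  proof -
    fix x assume xd: "x \<in> udom D"
    have qxd: "q x \<in> udom D" using dom xd by auto
    have h1: "C (q x) = uapp D (q x) - q (uapp D (q x))" using Cx[OF qxd] qq by simp
    have h2: "q (C x) = q (uapp D (q x)) - q (q (uapp D x))"
      using Cx[OF xd] lq by (simp add: linear_diff)
    have h3: "q (C (q x)) = q (uapp D (q x)) - q (uapp D (q x))"
      using h1 lq qq by (simp add: linear_diff)
    have "q (C x) = q (q (C x))" using qq by simp
    also have "\<dots> = q (C (q x))" using fo by simp
    also have "\<dots> = 0" using h3 by simp
    finally have z: "q (C x) = 0" .
    have "C (q x) = 0" using fo z by simp
    then have "uapp D (q x) = q (uapp D (q x))" using h1 by simp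
    also have "\<dots> = q (uapp D x)" using h2 z qq by simp
    finally show "uapp D (q x) = q (uapp D x)" .
  qed
  have cw: "commutes_with_uop q D" unfolding commutes_with_uop_def using dom comm by auto
  have ca: "\<forall>a\<in>A. q \<circ> a = a \<circ> q" using assms(3,7) unfolding commutative_algebra_def by auto
  obtain c where qc: "q = cscale J c"
    using assms(6) cbq cw ca unfolding irreducible_triple_def by blast
  show ?thesis
  proof (cases "\<exists>x::'h. x \<noteq> 0")
    case True
    then obtain x :: 'h where "x \<noteq> 0" by blast
    have "c = 0 \<or> c = 1"
      by (rule cscale_idem_cases[OF cs _ \<open>x \<noteq> 0\<close>]) (use qq qc in simp)
    then show ?thesis using qc by (auto simp: cscale_def fun_eq_iff)
  next
    case False
    then show ?thesis by (auto simp: fun_eq_iff)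
  qed
qed

end
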